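(* Let $(P,\preceq)$ be a poset, $\mathcal{X}:=\{X\subseteq P\mid (X,\preceq)\text{ well-ordered}\}$, $\Lambda$ a set, $\mathcal{I},\mathcal{O}\subseteq\Lambda$ finite disjoint sets, and $s$ a causal $(\mathcal{I},\mathcal{O})$-system over $\mathcal{X}$. Let $i\in\mathcal{I}$, $o\in\mathcal{O}$. Then for every $\mathbf{X}\in\mathcal{X}^{\mathcal{I}\setminus\{i\}}$ there exists a unique $X_i\in\mathcal{X}$ such that $s(\mathbf{X}\cup\{(i,X_i)\})(o)=X_i$.
   Context: $\mathcal{X}^{\mathcal{I}}$ is the set of functions $\mathcal{I}\to\mathcal{X}$. A causal $(\mathcal{I},\mathcal{O})$-system over $\mathcal{X}$ is a function $s:\mathcal{X}^{\mathcal{I}}\to\mathcal{X}^{\mathcal{O}}$ such that for all $\mathbf{X},\mathbf{X}'\in\mathcal{X}^{\mathcal{I}}$, all $o\in\mathcal{O}$ and all $y\in s(\mathbf{X})(o)\mathbin{\triangle}s(\mathbf{X}')(o)$ there exist $i\in\mathcal{I}$ and $x\in\mathbf{X}(i)\mathbin{\triangle}\mathbf{X}'(i)$ with $x\prec y$ (where $\mathbin{\triangle}$ is symmetric difference and $x\prec y$ means $x\preceq y$, $x\ne y$). *)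

theory Defs
  imports "HOL-Library.FuncSet"
begin

definition well_ordered_subset :: "'a::order set \<Rightarrow> bool" where
  "well_ordered_subset X \<longleftrightarrow>
     (\<forall>x\<in>X. \<forall>y\<in>X. x \<le> y \<or> y \<le> x) \<and>
     (\<forall>S. S \<subseteq> X \<longrightarrow> S \<noteq> {} \<longrightarrow> (\<exists>m\<in>S. \<forall>y\<in>S. m \<le> y))"

definition WO_sets :: "'a::order set set" where
  "WO_sets = {X. well_ordered_subset X}"

text \<open>Elements of X^I are extensional functions I -> X (value undefined outside I).
A causal (I,O)-system over X.\<close>
definition causal_system ::
  "'l set \<Rightarrow> 'l set \<Rightarrow> (('l \<Rightarrow> 'a::order set) \<Rightarrow> ('l \<Rightarrow> 'a set)) \<Rightarrow> bool" where
  "causal_system Ins Outs s \<longleftrightarrow>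
     (\<forall>X\<in>(Ins \<rightarrow>\<^sub>E WO_sets). s X \<in> (Outs \<rightarrow>\<^sub>E WO_sets)) \<and>
     (\<forall>X\<in>(Ins \<rightarrow>\<^sub>E WO_sets). \<forall>X'\<in>(Ins \<rightarrow>\<^sub>E WO_sets). \<forall>ou\<in>Outs.
        \<forall>y \<in> (s X ou - s X' ou) \<union> (s X' ou - s X ou).
          \<exists>i\<in>Ins. \<exists>x \<in> (X i - X' i) \<union> (X' i - X i). x < y)"

end

theory Submission
  imports Defs
begin

lemma wo_total: "X \<in> WO_sets \<Longrightarrow> x \<in> X \<Longrightarrow> y \<in> X \<Longrightarrow> x \<le> y \<or> y \<le> x"
  unfolding WO_sets_def well_ordered_subset_def by blast

lemma wo_min: "X \<in> WO_sets \<Longrightarrow> S \<subseteq> X \<Longrightarrow> S \<noteq> {} \<Longrightarrow> \<exists>m\<in>S. \<forall>y\<in>S. m \<le> y"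
  unfolding WO_sets_def well_ordered_subset_def by blast

lemma wo_subset: assumes "X \<in> WO_sets" "Y \<subseteq> X" shows "Y \<in> WO_sets"
proof -
  have h1: "\<forall>x\<in>X. \<forall>y\<in>X. x \<le> y \<or> y \<le> x"
    and h2: "\<forall>S. S \<subseteq> X \<longrightarrow> S \<noteq> {} \<longrightarrow> (\<exists>m\<in>S. \<forall>y\<in>S. m \<le> y)"
    using assms(1) unfolding WO_sets_def well_ordered_subset_def by auto
  have "\<forall>x\<in>Y. \<forall>y\<in>Y. x \<le> y \<or> y \<le> x" using h1 assms(2) by blast
  moreover have "\<forall>S. S \<subseteq> Y \<longrightarrow> S \<noteq> {} \<longrightarrow> (\<exists>m\<in>S. \<forall>y\<in>S. m \<le> y)"
    using h2 assms(2) by blast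
  ultimately show ?thesis unfolding WO_sets_def well_ordered_subset_def by blast
qed

lemma min_diff:
  fixes A B :: "'a::order set"
  assumes A: "A \<in> WO_sets" and B: "B \<in> WO_sets" and ne: "A \<noteq> B"
  shows "\<exists>m \<in> (A-B)\<union>(B-A). \<forall>x\<in>(A-B)\<union>(B-A). \<not> x < m"
proof -
  let ?D = "(A-B)\<union>(B-A)"
  show ?thesis
  proof (cases "A - B = {}")
    case True
    then have "B - A \<noteq> {}" using ne by blast
    then obtain b where b: "b \<in> B - A" "\<forall>y\<in>B-A. b \<le> y" using wo_min[OF B, of "B-A"] by blast
    have "\<forall>x\<in>?D. \<not> x < b"
    proof
      fix x assume "x \<in> ?D" then have "x \<in> B - A" using True by blast
      then show "\<not> x < b" using b by (simp add: leD)
    qed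
    then show ?thesis using b by blast
  next
    case False
    then obtain a where a: "a \<in> A - B" "\<forall>y\<in>A-B. a \<le> y" using wo_min[OF A, of "A-B"] by blast
    show ?thesis
    proof (cases "\<exists>x\<in>B-A. x < a")
      case False
      have "\<forall>x\<in>?D. \<not> x < a"
      proof
        fix x assume "x \<in> ?D"
        then show "\<not> x < a" using a False by (auto simp: leD)
      qed
      then show ?thesis using a by blast
    next
      case True
      then have "B - A \<noteq> {}" by blast
      then obtain b where b: "b \<in> B - A" "\<forall>y\<in>B-A. b \<le> y" using wo_min[OF B, of "B-A"] by blast
      obtain x where x: "x \<in> B - A" "x < a" using True by blast
      have "b < a" using b x by (meson order.strict_trans1)
      have "\<forall>z\<in>?D. \<not> z < b"
      proof
        fix z assume z: "z \<in> ?D"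
        show "\<not> z < b"
        proof
          assume zb: "z < b"
          show False
          proof (cases "z \<in> A - B")
            case True
            then have "a \<le> z" using a by blast
            then show False using zb \<open>b < a\<close> by (meson less_le_not_le order.trans)
          next
            case False
            then have "z \<in> B - A" using z by blast
            then have "b \<le> z" using b by blast
            then show False using zb by (meson leD)
          qed
        qed
      qed
      then show ?thesis using b by blast
    qed
  qed
qed

locale contr =
  fixes f :: "'a::order set \<Rightarrow> 'a set"
  assumes hf: "\<And>A. A \<in> WO_sets \<Longrightarrow> f A \<in> WO_sets"
    and hc: "\<And>A B y. A \<in> WO_sets \<Longrightarrow> B \<in> WO_sets \<Longrightarrow> y \<in> (f A - f B) \<union> (f B - f A)
       \<Longrightarrow> \<exists>x\<in>(A-B)\<union>(B-A). x < y"
begin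

lemma agree:
  assumes "A \<in> WO_sets" "B \<in> WO_sets" "y \<in> f A" "\<forall>x\<in>(A-B)\<union>(B-A). \<not> x < y"
  shows "y \<in> f B"
  using hc[OF assms(1,2), of y] assms(3,4) by blast

lemma unique:
  assumes "A \<in> WO_sets" "B \<in> WO_sets" "f A = A" "f B = B"
  shows "A = B"
proof (rule ccontr)
  assume "A \<noteq> B"
  then obtain m where m: "m \<in> (A-B)\<union>(B-A)" "\<forall>x\<in>(A-B)\<union>(B-A). \<not> x < m"
    using min_diff assms(1,2) by blast
  then show False using hc[OF assms(1,2), of m] assms(3,4) by auto
qed

definition good :: "'a set \<Rightarrow> bool" where
  "good A \<longleftrightarrow> A \<in> WO_sets \<and> A \<subseteq> f A \<and> (\<forall>a\<in>A. \<forall>y\<in>f A. y \<le> a \<longrightarrow> y \<in> A)"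

lemma chain1:
  assumes gA: "good A" and gB: "good B" and m: "m \<in> A - B"
    and mm: "\<forall>x\<in>(A-B)\<union>(B-A). \<not> x < m"
  shows "B \<subseteq> A \<and> (\<forall>b\<in>B. \<forall>a\<in>A. a \<le> b \<longrightarrow> a \<in> B)"
proof -
  have A: "A \<in> WO_sets" "A \<subseteq> f A" using gA good_def by auto
  have B: "B \<in> WO_sets" "B \<subseteq> f B" "\<forall>a\<in>B. \<forall>y\<in>f B. y \<le> a \<longrightarrow> y \<in> B"
    using gB good_def by auto
  have "m \<in> f B" using agree[OF A(1) B(1)] m mm A(2) by blast
  have lt: "b < m" if "b \<in> B" for b
  proof -
    have "b \<le> m \<or> m \<le> b" using wo_total[OF hf[OF B(1)]] \<open>m \<in> f B\<close> B(2) that by blast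
    moreover have "\<not> m \<le> b" using B(3) that \<open>m \<in> f B\<close> m by blast
    ultimately show ?thesis using m that by (auto simp: order.order_iff_strict)
  qed
  have "B \<subseteq> A" using lt mm by blast
  moreover have "\<forall>b\<in>B. \<forall>a\<in>A. a \<le> b \<longrightarrow> a \<in> B"
    using lt mm by (meson DiffI UnI1 order.strict_trans1)
  ultimately show ?thesis by blast
qed

lemma chain:
  assumes gA: "good A" and gB: "good B"
  shows "(A \<subseteq> B \<and> (\<forall>a\<in>A. \<forall>b\<in>B. b \<le> a \<longrightarrow> b \<in> A)) \<or>
         (B \<subseteq> A \<and> (\<forall>b\<in>B. \<forall>a\<in>A. a \<le> b \<longrightarrow> a \<in> B))"
proof (cases "A = B")
  case False
  have "A \<in> WO_sets" "B \<in> WO_sets" using gA gB good_def by auto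
  then obtain m where m: "m \<in> (A-B)\<union>(B-A)" "\<forall>x\<in>(A-B)\<union>(B-A). \<not> x < m"
    using min_diff False by blast
  show ?thesis
  proof (cases "m \<in> A - B")
    case True
    then show ?thesis using chain1[OF gA gB True m(2)] by blast
  next
    case False
    then have "m \<in> B - A" using m by blast
    moreover have "\<forall>x\<in>(B-A)\<union>(A-B). \<not> x < m" using m by blast
    ultimately show ?thesis using chain1[OF gB gA] by blast
  qed
qed auto

definition U where "U = \<Union>{A. good A}"

lemma seg: "good A \<Longrightarrow> a \<in> A \<Longrightarrow> u \<in> U \<Longrightarrow> u \<le> a \<Longrightarrow> u \<in> A"
  unfolding U_def using chain by blast

lemma U_total: "x \<in> U \<Longrightarrow> y \<in> U \<Longrightarrow> x \<le> y \<or> y \<le> x"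
proof -
  assume "x \<in> U" "y \<in> U"
  then obtain A B where "good A" "good B" "x \<in> A" "y \<in> B" unfolding U_def by blast
  then show ?thesis using chain[of A B] wo_total good_def by blast
qed

lemma U_WO: "U \<in> WO_sets"
  unfolding WO_sets_def well_ordered_subset_def
proof (intro CollectI conjI)
  show "\<forall>x\<in>U. \<forall>y\<in>U. x \<le> y \<or> y \<le> x" using U_total by blast
  show "\<forall>S. S \<subseteq> U \<longrightarrow> S \<noteq> {} \<longrightarrow> (\<exists>m\<in>S. \<forall>y\<in>S. m \<le> y)"
  proof (intro allI impI)
    fix S assume S: "S \<subseteq> U" "S \<noteq> {}"
    then obtain s where "s \<in> S" by blast
    then obtain A where A: "good A" "s \<in> A" using S unfolding U_def by blast
    then obtain m where m: "m \<in> S \<inter> A" "\<forall>y\<in>S \<inter> A. m \<le> y"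
      using wo_min[of A "S \<inter> A"] \<open>s \<in> S\<close> good_def by blast
    have "\<forall>y\<in>S. m \<le> y"
    proof
      fix y assume y: "y \<in> S"
      have "y \<le> m \<or> m \<le> y" using U_total y m S by blast
      moreover have "y \<le> m \<Longrightarrow> m \<le> y" using seg[OF A(1), of m y] m y S by blast
      ultimately show "m \<le> y" by blast
    qed
    then show "\<exists>m\<in>S. \<forall>y\<in>S. m \<le> y" using m by blast
  qed
qed

lemma U_good: "good U"
proof -
  have sub: "U \<subseteq> f U"
  proof
    fix y assume "y \<in> U"
    then obtain A where A: "good A" "y \<in> A" unfolding U_def by blast
    have "\<forall>x\<in>(A-U)\<union>(U-A). \<not> x < y"
      using seg[OF A(1) A(2)] A unfolding U_def by (auto dest: less_imp_le)
    moreover have "y \<in> f A" using A good_def by blast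
    ultimately show "y \<in> f U" using agree A U_WO good_def by blast
  qed
  have "\<forall>u\<in>U. \<forall>y\<in>f U. y \<le> u \<longrightarrow> y \<in> U"
  proof (intro ballI impI)
    fix u y assume u: "u \<in> U" and y: "y \<in> f U" and yu: "y \<le> u"
    then obtain A where A: "good A" "u \<in> A" unfolding U_def by blast
    have "\<forall>x\<in>(U-A)\<union>(A-U). \<not> x < y"
    proof
      fix x assume x: "x \<in> (U-A)\<union>(A-U)"
      show "\<not> x < y"
      proof
        assume "x < y"
        then have "x \<le> u" using yu by simp
        then have "x \<in> A" using seg[OF A(1) A(2)] x by blast
        then show False using x A unfolding U_def by blast
      qed
    qed
    then have "y \<in> f A" using agree[of U A y] U_WO A good_def y by blast
    then have "y \<in> A" using A good_def yu by blast
    then show "y \<in> U" using A unfolding U_def by blast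
  qed
  then show ?thesis using sub U_WO good_def by blast
qed

lemma U_fix: "f U = U"
proof (rule ccontr)
  assume ne: "f U \<noteq> U"
  have gU: "U \<in> WO_sets" "U \<subseteq> f U" "\<forall>a\<in>U. \<forall>y\<in>f U. y \<le> a \<longrightarrow> y \<in> U"
    using U_good good_def by auto
  have fW: "f U \<in> WO_sets" using hf gU by blast
  then obtain m where m: "m \<in> f U - U" "\<forall>y\<in>f U - U. m \<le> y"
    using wo_min[OF fW, of "f U - U"] ne gU(2) by blast
  have ltm: "y < m" if "y \<in> U" for y
  proof -
    have "y \<le> m \<or> m \<le> y" using wo_total[OF fW] m gU(2) that by blast
    moreover have "\<not> m \<le> y" using gU(3) that m by blast
    ultimately show ?thesis using m that by (auto simp: order.order_iff_strict)
  qed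
  define V where "V = insert m U"
  have VW: "V \<in> WO_sets" using wo_subset[OF fW] m gU(2) V_def by blast
  have diff: "(V-U)\<union>(U-V) = {m}" using V_def m by blast
  have diff2: "(U-V)\<union>(V-U) = {m}" using V_def m by blast
  have keep: "y \<in> f V" if "y \<in> f U" "\<not> m < y" for y
    using agree[OF gU(1) VW that(1)] diff2 that(2) by simp
  have bk: "y \<in> f U" if "y \<in> f V" "\<not> m < y" for y
    using agree[OF VW gU(1) that(1)] diff that(2) by simp
  have "V \<subseteq> f V"
  proof
    fix y assume "y \<in> V"
    then show "y \<in> f V"
    proof (cases "y = m")
      case True then show ?thesis using keep m by blast
    next
      case False then have "y \<in> U" using \<open>y \<in> V\<close> V_def by blast
      then show ?thesis using keep ltm gU(2) by (meson less_asym subsetD)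
    qed
  qed
  moreover have "\<forall>v\<in>V. \<forall>y\<in>f V. y \<le> v \<longrightarrow> y \<in> V"
  proof (intro ballI impI)
    fix v y assume v: "v \<in> V" and y: "y \<in> f V" and yv: "y \<le> v"
    have "v \<le> m" using v V_def ltm by (auto dest: less_imp_le)
    then have ym: "y \<le> m" using yv by simp
    then have "\<not> m < y" by (simp add: leD)
    then have yU: "y \<in> f U" using bk y by blast
    show "y \<in> V"
    proof (cases "y = m")
      case True then show ?thesis using V_def by blast
    next
      case False
      then have "y < m" using ym by simp
      then have "y \<in> U" using m yU by (meson DiffI leD)
      then show ?thesis using V_def by blast
    qed
  qed
  ultimately have "good V" using VW unfolding good_def by simp
  then have "m \<in> U" unfolding U_def V_def by auto
  then show False using m by blast
qed

lemma ex_unique: "\<exists>!A. A \<in> WO_sets \<and> f A = A"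
  using U_WO U_fix unique by blast

end

theorem corollary6p3:
  fixes Ins Outs :: "'l set"
    and s :: "('l \<Rightarrow> 'a::order set) \<Rightarrow> ('l \<Rightarrow> 'a set)"
    and i ou :: 'l
  assumes "finite Ins" and "finite Outs" and "Ins \<inter> Outs = {}"
    and "causal_system Ins Outs s"
    and "i \<in> Ins" and "ou \<in> Outs"
  shows "\<forall>X \<in> (Ins - {i}) \<rightarrow>\<^sub>E WO_sets.
           \<exists>!Xi. Xi \<in> WO_sets \<and> s (X(i := Xi)) ou = Xi"
proof
  fix X :: "'l \<Rightarrow> 'a set" assume X: "X \<in> (Ins - {i}) \<rightarrow>\<^sub>E WO_sets"
  have mem: "X(i := A) \<in> Ins \<rightarrow>\<^sub>E WO_sets" if "A \<in> WO_sets" for A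
    using X that assms(5) by (auto simp: PiE_def Pi_def extensional_def)
  have c1: "\<forall>X\<in>(Ins \<rightarrow>\<^sub>E WO_sets). s X \<in> (Outs \<rightarrow>\<^sub>E WO_sets)"
   and c2: "\<forall>X\<in>(Ins \<rightarrow>\<^sub>E WO_sets). \<forall>X'\<in>(Ins \<rightarrow>\<^sub>E WO_sets). \<forall>ou\<in>Outs.
        \<forall>y \<in> (s X ou - s X' ou) \<union> (s X' ou - s X ou).
          \<exists>i\<in>Ins. \<exists>x \<in> (X i - X' i) \<union> (X' i - X i). x < y"
    using assms(4) unfolding causal_system_def by blast+
  interpret contr "\<lambda>A::'a set. s (X(i := A)) ou"
  proof
    fix A :: "'a set" assume "A \<in> WO_sets"
    then show "s (X(i := A)) ou \<in> WO_sets" using c1 mem assms(6) by blast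
  next
    fix A B :: "'a set" and y
    assume A: "A \<in> WO_sets" and B: "B \<in> WO_sets"
      and y: "y \<in> (s (X(i := A)) ou - s (X(i := B)) ou) \<union> (s (X(i := B)) ou - s (X(i := A)) ou)"
    obtain j x where "j \<in> Ins" "x \<in> ((X(i := A)) j - (X(i := B)) j) \<union> ((X(i := B)) j - (X(i := A)) j)" "x < y"
      using c2 mem[OF A] mem[OF B] assms(6) y by blast
    then show "\<exists>x\<in>(A-B)\<union>(B-A). x < y" by (cases "j = i") auto
  qed
  show "\<exists>!Xi. Xi \<in> WO_sets \<and> s (X(i := Xi)) ou = Xi" using ex_unique .
qed

end
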